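(* Let $T$ be a tree with root $r$, edges directed towards $r$, let $c:V(T)\to\mathbb{Z}$, and let $X$ be an edge set of $T$ that is legal for $c$. Then there is a rayless $X'\subseteq X$ such that (1) $A(v,X')\ge c(v)$ for all vertices $v$ with $A(v,X)\ge c(v)$; and (2) $A(v,X')=A(v,X)$ for all $v\in ter(X)$.
   Context: Edges are ordered pairs $st$ pointing from $s$ to $t$, directed towards $r$; a leaf is a vertex with no incoming edges. For an edge set $X$, $V(X)$ is the set of vertices incident with an edge of $X$, and $ter(X)$ is the set of vertices $s$ such that there is no vertex $t$ with $st\in X$. $A(v,X)$ is the number of edges of $X$ pointing to $v$ minus the number pointing away from $v$. An edge set is \emph{rayless} if it contains no ray. A \emph{leafless forest} is an edge set $S$ such that the subforest $(V(S),S)$ of $T$ has no leaf (no vertex without an incoming edge of $S$). Given $c$, a subset $S\subseteq X$ is \emph{illegal} for $c$ if $S$ is a leafless forest and $A(s,X\setminus S)\le c(s)$ for all $st\in S$; $X$ is \emph{legal} for $c$ if no nonempty subset of $X$ is illegal for $c$. *)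

theory Defs
  imports "HOL-Library.Extended_Real"
begin

definition rooted_tree :: "'v set \<Rightarrow> ('v \<times> 'v) set \<Rightarrow> 'v \<Rightarrow> bool" where
  "rooted_tree V E r \<longleftrightarrow>
     E \<subseteq> V \<times> V \<and> r \<in> V \<and>
     (\<forall>t. (r, t) \<notin> E) \<and>
     (\<forall>s\<in>V. s \<noteq> r \<longrightarrow> (\<exists>!t. (s, t) \<in> E)) \<and>
     (\<forall>s\<in>V. (s, r) \<in> E\<^sup>*)"

definition verts :: "('v \<times> 'v) set \<Rightarrow> 'v set" where
  "verts X = {v. \<exists>e\<in>X. v = fst e \<or> v = snd e}"

definition ter :: "('v \<times> 'v) set \<Rightarrow> 'v set" where
  "ter X = {s \<in> verts X. \<not> (\<exists>t. (s, t) \<in> X)}"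

definition A :: "'v \<Rightarrow> ('v \<times> 'v) set \<Rightarrow> ereal" where
  "A v X = (if finite {s. (s, v) \<in> X} then ereal (real (card {s. (s, v) \<in> X})) else \<infinity>)
           - ereal (real (card {t. (v, t) \<in> X}))"

definition is_ray_in :: "('v \<times> 'v) set \<Rightarrow> (nat \<Rightarrow> 'v) \<Rightarrow> bool" where
  "is_ray_in X f \<longleftrightarrow> inj f \<and> (\<forall>i. (f i, f (Suc i)) \<in> X \<or> (f (Suc i), f i) \<in> X)"

definition rayless :: "('v \<times> 'v) set \<Rightarrow> bool" where
  "rayless X \<longleftrightarrow> \<not> (\<exists>f. is_ray_in X f)"

definition leafless_forest :: "('v \<times> 'v) set \<Rightarrow> bool" where
  "leafless_forest S \<longleftrightarrow> (\<forall>v\<in>verts S. \<exists>s. (s, v) \<in> S)"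

definition illegal :: "('v \<Rightarrow> int) \<Rightarrow> ('v \<times> 'v) set \<Rightarrow> ('v \<times> 'v) set \<Rightarrow> bool" where
  "illegal c X S \<longleftrightarrow> S \<subseteq> X \<and> leafless_forest S \<and>
     (\<forall>(s, t)\<in>S. A s (X - S) \<le> ereal (real_of_int (c s)))"

definition legal :: "('v \<Rightarrow> int) \<Rightarrow> ('v \<times> 'v) set \<Rightarrow> bool" where
  "legal c X \<longleftrightarrow> (\<forall>S. S \<subseteq> X \<longrightarrow> S \<noteq> {} \<longrightarrow> \<not> illegal c X S)"

end

theory Submission
  imports Defs
begin

definition Lam :: "('v \<Rightarrow> int) \<Rightarrow> ('v \<times> 'v) set \<Rightarrow> 'v set \<Rightarrow> 'v set" where
  "Lam c X R = {s. A s X < ereal (real_of_int (c s)) \<or>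
      (\<exists>F. finite F \<and> F \<subseteq> {u. (u,s)\<in>X} \<inter> R \<and> int (card F) \<ge> c s + 1)}"

primrec Rn :: "('v \<Rightarrow> int) \<Rightarrow> ('v \<times> 'v) set \<Rightarrow> nat \<Rightarrow> 'v set" where
  "Rn c X 0 = {}"
| "Rn c X (Suc n) = Lam c X (Rn c X n)"

lemma Lam_mono: "R \<subseteq> R' \<Longrightarrow> Lam c X R \<subseteq> Lam c X R'"
  unfolding Lam_def by blast

lemma Rn_Suc_mono: "Rn c X n \<subseteq> Rn c X (Suc n)"
  by (induction n) (auto intro: Lam_mono[THEN subsetD])

lemma Rn_mono: "m \<le> n \<Longrightarrow> Rn c X m \<subseteq> Rn c X n"
  using lift_Suc_mono_le[of "Rn c X", OF Rn_Suc_mono] by blast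

lemma finite_in_Rn:
  assumes "finite F" "F \<subseteq> (\<Union>n. Rn c X n)"
  shows "\<exists>m. F \<subseteq> Rn c X m"
  using assms
proof (induction F rule: finite_induct)
  case empty then show ?case by auto
next
  case (insert x F)
  then obtain a where a: "x \<in> Rn c X a" by auto
  from insert obtain b where b: "F \<subseteq> Rn c X b" by auto
  have "x \<in> Rn c X (max a b)" using a Rn_mono[of a "max a b" c X] by auto
  moreover have "F \<subseteq> Rn c X (max a b)" using b Rn_mono[of b "max a b" c X] by auto
  ultimately show ?case by auto
qed

lemma card_out_le1:
  assumes "\<And>t t'. (v,t)\<in>Y \<Longrightarrow> (v,t')\<in>Y \<Longrightarrow> t=t'"
  shows "finite {t. (v,t)\<in>Y} \<and> card {t. (v,t)\<in>Y} \<le> 1"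
proof (cases "\<exists>t. (v,t)\<in>Y")
  case True
  then obtain t where "(v,t)\<in>Y" by auto
  then have "{t. (v,t)\<in>Y} = {t}" using assms by auto
  then show ?thesis by simp
next
  case False
  then have "{t. (v,t)\<in>Y} = {}" by auto
  then show ?thesis by simp
qed

lemma A_ge:
  assumes "finite F" "F \<subseteq> {u. (u,v)\<in>Y}" "int (card F) \<ge> c + 1"
    and "\<And>t t'. (v,t)\<in>Y \<Longrightarrow> (v,t')\<in>Y \<Longrightarrow> t=t'"
  shows "A v Y \<ge> ereal (real_of_int c)"
proof -
  define I where "I = {u. (u,v)\<in>Y}"
  define Ou where "Ou = {t. (v,t)\<in>Y}"
  have co0: "finite Ou \<and> card Ou \<le> 1" unfolding Ou_def
    by (rule card_out_le1) (erule (1) assms(4))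
  then have co: "card Ou \<le> 1" by (rule conjunct2)
  have AI: "A v Y = (if finite I then ereal (real (card I)) else \<infinity>) - ereal (real (card Ou))"
    unfolding A_def I_def Ou_def by (rule refl)
  show ?thesis
  proof (cases "finite I")
    case True
    have "card F \<le> card I" using card_mono[OF True] assms(2) unfolding I_def by blast
    then have le: "real_of_int c \<le> real (card I) - real (card Ou)"
      using co assms(3) by linarith
    have "A v Y = ereal (real (card I) - real (card Ou))" using AI True by simp
    then show ?thesis using le by simp
  next
    case False
    then have "A v Y = \<infinity>" using AI by simp
    then show ?thesis by simp
  qed
qed

lemma all_in_R:
  assumes leg: "legal c X"
    and uniq: "\<And>s t t'. (s,t)\<in>X \<Longrightarrow> (s,t')\<in>X \<Longrightarrow> t=t'"
    and st: "(s,t) \<in> X"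
  shows "\<exists>n. s \<in> Rn c X n"
proof (rule ccontr)
  assume nR: "\<not> (\<exists>n. s \<in> Rn c X n)"
  define Rinf where "Rinf = (\<Union>n. Rn c X n)"
  define W where "W = {s. (\<exists>t. (s,t)\<in>X) \<and> s \<notin> Rinf}"
  define S where "S = {e \<in> X. fst e \<in> W}"
  have sW: "s \<in> W" using st nR unfolding W_def Rinf_def by auto
  have Sne: "S \<noteq> {}" using sW st unfolding S_def by force
  have key: "finite {u. (u,w)\<in>X \<and> u \<in> Rinf} \<and> int (card {u. (u,w)\<in>X \<and> u \<in> Rinf}) \<le> c w
      \<and> \<not> A w X < ereal (real_of_int (c w))" if wW: "w \<in> W" for w
  proof -
    define C where "C = {u. (u,w)\<in>X \<and> u \<in> Rinf}"
    have nw: "\<And>n. w \<notin> Rn c X (Suc n)" using wW unfolding W_def Rinf_def by blast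
    have "w \<notin> Lam c X {}" using nw[of 0] by simp
    then have nA: "\<not> A w X < ereal (real_of_int (c w))" by (simp add: Lam_def)
    have fs: "int (card F) \<le> c w" if fF: "finite F" and FC: "F \<subseteq> C" for F
    proof -
      have "F \<subseteq> Rinf" using FC C_def by auto
      then have "\<exists>m. F \<subseteq> Rn c X m" using finite_in_Rn[OF fF] Rinf_def by auto
      then obtain m where m: "F \<subseteq> Rn c X m" by blast
      have "F \<subseteq> {u. (u,w)\<in>X} \<inter> Rn c X m" using m FC C_def by auto
      moreover have "w \<notin> Lam c X (Rn c X m)" using nw[of m] by simp
      ultimately have "\<not> int (card F) \<ge> c w + 1" using fF unfolding Lam_def by auto
      then show ?thesis by simp
    qed
    have fC: "finite C"
    proof (rule ccontr)
      assume "infinite C"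
      then obtain F where F1: "F \<subseteq> C" and F2: "finite F" and F3: "card F = nat (c w) + 1"
        using infinite_arbitrarily_large by blast
      have "int (card F) \<le> c w" using fs[OF F2 F1] .
      then show False using F3 by linarith
    qed
    show ?thesis using fC fs[OF fC] nA C_def by auto
  qed
  have child: "\<exists>u. (u,w)\<in>X \<and> u \<in> W" if wW: "w \<in> W" for w
  proof (rule ccontr)
    assume nc: "\<not> (\<exists>u. (u,w)\<in>X \<and> u \<in> W)"
    have eq: "{u. (u,w)\<in>X} = {u. (u,w)\<in>X \<and> u \<in> Rinf}"
      using nc unfolding W_def by auto
    obtain t0 where t0: "(w,t0)\<in>X" using wW W_def by auto
    have out: "{t. (w,t)\<in>X} = {t0}" using t0 uniq by auto
    from key[OF wW] have f: "finite {u. (u,w)\<in>X}" and cc: "int (card {u. (u,w)\<in>X}) \<le> c w"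
      and nA: "\<not> A w X < ereal (real_of_int (c w))" using eq by auto
    have "A w X = ereal (real (card {u. (u,w)\<in>X}) - 1)" unfolding A_def using f out by simp
    moreover have "real (card {u. (u,w)\<in>X}) - 1 < real_of_int (c w)" using cc by linarith
    ultimately show False using nA by simp
  qed
  have ill: "illegal c X S"
    unfolding illegal_def
  proof (intro conjI)
    show "S \<subseteq> X" unfolding S_def by auto
    show "leafless_forest S" unfolding leafless_forest_def
    proof
      fix v assume "v \<in> verts S"
      then obtain e where e: "e \<in> S" "v = fst e \<or> v = snd e" unfolding verts_def by auto
      show "\<exists>s. (s, v) \<in> S"
      proof (cases "v = snd e")
        case True then show ?thesis using e by (metis prod.collapse)
      next
        case False
        then have "v \<in> W" using e unfolding S_def by auto
        then obtain u where "(u,v)\<in>X" "u\<in>W" using child by blast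
        then show ?thesis unfolding S_def by auto
      qed
    qed
    show "\<forall>(s, t)\<in>S. A s (X - S) \<le> ereal (real_of_int (c s))"
    proof (clarify)
      fix a b assume ab: "(a,b)\<in>S"
      then have aW: "a \<in> W" unfolding S_def by auto
      have i1: "{u. (u,a) \<in> X - S} = {u. (u,a)\<in>X \<and> u \<in> Rinf}"
        unfolding S_def W_def by auto
      have o1: "{t. (a,t) \<in> X - S} = {}" using aW unfolding S_def by auto
      show "A a (X - S) \<le> ereal (real_of_int (c a))"
        using key[OF aW] unfolding A_def i1 o1 by simp
    qed
  qed
  then show False using leg Sne unfolding legal_def illegal_def by blast
qed

lemma decr_nat: "(\<And>k. (g :: nat \<Rightarrow> nat) (Suc k) < g k) \<Longrightarrow> False"
proof -
  assume h: "\<And>k. g (Suc k) < g k"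
  have "g k + k \<le> g 0" for k
  proof (induction k)
    case 0 show ?case by simp
  next
    case (Suc k)
    have "g (Suc k) < g k" by (rule h)
    with Suc show ?case by simp
  qed
  from this[of "Suc (g 0)"] show False by simp
qed

lemma path_reach:
  assumes "(x,y) \<in> E\<^sup>*" "\<And>s t t'. (s,t)\<in>E \<Longrightarrow> (s,t')\<in>E \<Longrightarrow> t=t'"
  shows "\<forall>f. f 0 = x \<longrightarrow> (\<forall>i. (f i, f (Suc i)) \<in> E) \<longrightarrow> (\<exists>n. f n = y)"
  using assms(1)
proof (induction rule: converse_rtrancl_induct)
  case base
  then show ?case by auto
next
  case (step x z)
  show ?case
  proof (intro allI impI)
    fix f :: "nat \<Rightarrow> _" assume f0: "f 0 = x" and p: "\<forall>i. (f i, f (Suc i)) \<in> E"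
    have "f 1 = z" using p[rule_format, of 0] f0 step(1) assms(2) by auto
    then obtain n where "f (Suc n) = y" using step(3)[rule_format, of "\<lambda>i. f (Suc i)"] p by auto
    then show "\<exists>n. f n = y" by blast
  qed
qed

theorem lemma2p8:
  fixes V :: "'v set" and E :: "('v \<times> 'v) set" and r :: 'v
    and c :: "'v \<Rightarrow> int" and X :: "('v \<times> 'v) set"
  assumes "rooted_tree V E r"
    and "X \<subseteq> E"
    and "legal c X"
  shows "\<exists>X'. X' \<subseteq> X \<and> rayless X' \<and>
           (\<forall>v\<in>V. A v X \<ge> ereal (real_of_int (c v)) \<longrightarrow> A v X' \<ge> ereal (real_of_int (c v))) \<and>
           (\<forall>v\<in>ter X. A v X' = A v X)"
proof -
  have Euniq: "\<And>s t t'. (s,t)\<in>E \<Longrightarrow> (s,t')\<in>E \<Longrightarrow> t=t'"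
  proof -
    fix s t t' assume h: "(s,t)\<in>E" "(s,t')\<in>E"
    have "s \<in> V" "s \<noteq> r" using h assms(1) unfolding rooted_tree_def by auto
    then have "\<exists>!t. (s,t)\<in>E" using assms(1) unfolding rooted_tree_def by blast
    then show "t = t'" using h by blast
  qed
  have uniq: "\<And>s t t'. (s,t)\<in>X \<Longrightarrow> (s,t')\<in>X \<Longrightarrow> t=t'" using assms(2) by (intro Euniq) auto
  define N where "N = {s. \<exists>t. (s,t)\<in>X}"
  define rk where "rk s = (LEAST n. s \<in> Rn c X n)" for s
  define X' where "X' = {(s,t)\<in>X. t \<notin> N \<or> (A t X \<ge> ereal (real_of_int (c t)) \<and> rk s < rk t)}"
  have sub: "X' \<subseteq> X" unfolding X'_def by auto
  have uniq': "\<And>s t t'. (s,t)\<in>X' \<Longrightarrow> (s,t')\<in>X' \<Longrightarrow> t=t'" using sub by (intro uniq) auto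
  have P2: "A t X' \<ge> ereal (real_of_int (c t))"
    if tN: "t \<in> N" and tA: "A t X \<ge> ereal (real_of_int (c t))" for t
  proof -
    obtain s0 where "(t,s0)\<in>X" using tN N_def by auto
    then have "\<exists>n. t \<in> Rn c X n"
      by (intro all_in_R[OF assms(3)]) (auto intro: uniq)
    then obtain n where "t \<in> Rn c X n" by blast
    then have tr: "t \<in> Rn c X (rk t)" unfolding rk_def by (rule LeastI)
    then obtain k where k: "rk t = Suc k" by (cases "rk t") auto
    then have "t \<in> Lam c X (Rn c X k)" using tr by simp
    then obtain F where F: "finite F" "F \<subseteq> {u. (u,t)\<in>X} \<inter> Rn c X k" "int (card F) \<ge> c t + 1"
      using tA unfolding Lam_def by (auto simp: not_less[symmetric])
    have "F \<subseteq> {u. (u,t)\<in>X'}"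
    proof
      fix u assume u: "u \<in> F"
      then have "rk u \<le> k" using F(2) unfolding rk_def by (auto intro: Least_le)
      then show "u \<in> {u. (u,t)\<in>X'}" using u F(2) k tA unfolding X'_def by auto
    qed
    then show ?thesis by (rule A_ge[OF F(1) _ F(3)]) (erule (1) uniq')
  qed
  have P3: "A v X' = A v X" if "v \<notin> N" for v
  proof -
    have "{u. (u,v)\<in>X'} = {u. (u,v)\<in>X}" using that unfolding X'_def by auto
    moreover have "{t. (v,t)\<in>X'} = {t. (v,t)\<in>X}" using that sub unfolding N_def by auto
    ultimately show ?thesis unfolding A_def by simp
  qed
  have ray: "rayless X'"
    unfolding rayless_def
  proof
    assume "\<exists>f. is_ray_in X' f"
    then obtain f where inj: "inj f" and st: "\<And>i. (f i, f (Suc i)) \<in> X' \<or> (f (Suc i), f i) \<in> X'"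
      unfolding is_ray_in_def by blast
    have dstep: "(f (Suc (Suc i)), f (Suc i)) \<in> X'" if "(f (Suc i), f i) \<in> X'" for i
    proof (rule ccontr)
      assume "\<not> ?thesis"
      then have "(f (Suc i), f (Suc (Suc i))) \<in> X'" using st by blast
      then have "f i = f (Suc (Suc i))" by (rule uniq'[OF that])
      then have "i = Suc (Suc i)" by (rule injD[OF inj])
      then show False by simp
    qed
    show False
    proof (cases "\<exists>i. (f (Suc i), f i) \<in> X'")
      case True
      then obtain i where i: "(f (Suc i), f i) \<in> X'" by blast
      have all: "(f (Suc (i+k)), f (i+k)) \<in> X'" for k
        by (induction k) (use i dstep in auto)
      define g where "g k = rk (f (Suc (i+k)))" for k
      have "g (Suc k) < g k" for k
      proof -
        have e1: "(f (Suc (Suc (i+k))), f (Suc (i+k))) \<in> X'" using all[of "Suc k"] by simp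
        have "f (Suc (i+k)) \<in> N" using all[of k] sub unfolding N_def by auto
        then show ?thesis using e1 unfolding X'_def g_def by auto
      qed
      then show False using decr_nat by blast
    next
      case False
      then have up: "\<forall>i. (f i, f (Suc i)) \<in> E" using st sub assms(2) by blast
      have "f 0 \<in> V" using up[rule_format, of 0] assms(1) unfolding rooted_tree_def by auto
      then have "(f 0, r) \<in> E\<^sup>*" using assms(1) unfolding rooted_tree_def by auto
      then have "\<forall>g. g 0 = f 0 \<longrightarrow> (\<forall>i. (g i, g (Suc i)) \<in> E) \<longrightarrow> (\<exists>n. g n = r)"
        by (rule path_reach) (erule (1) Euniq)
      then obtain n where "f n = r" using up by blast
      then show False using up[rule_format, of n] assms(1) unfolding rooted_tree_def by auto
    qed
  qed
  show ?thesis
  proof (intro exI conjI ballI impI)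
    show "X' \<subseteq> X" by (rule sub)
    show "rayless X'" by (rule ray)
  next
    fix v assume "v \<in> V" "A v X \<ge> ereal (real_of_int (c v))"
    then show "A v X' \<ge> ereal (real_of_int (c v))" using P2 P3 by (cases "v \<in> N") auto
  next
    fix v assume "v \<in> ter X"
    then have "v \<notin> N" unfolding ter_def N_def by auto
    then show "A v X' = A v X" by (rule P3)
  qed
qed

end
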